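(* Let $V$ be a $(\mathfrak g,K)$-module and let $v\in V_{h,p,p}$ be a minimal vector. Then: (i) $2(p+1)Z_{32}v=-Z_{12}Z_{31}v$ and $2(p+1)Z_{13}v=Z_{12}Z_{23}v$; (ii) $S^{-3}_{-1}S^3_1v-(p+1)S^3_{-1}S^{-3}_1v=\frac12(p-h)(p+1)v$; (iii) $Cv=\bigl(\frac13h^2+p^2+2h+2p\bigr)v+4\frac{p+2}{p+1}S^{-3}_{-1}S^3_1v$; (iv) $\Delta_3v=\frac19h(h+3p+12)(h-3p+6)v+2\frac{(p+2)(h-3p+6)}{p+1}S^{-3}_{-1}S^3_1v$.
   Context: $G=\mathrm{SU}(2,1)$ (the matrices $g\in\mathrm{SL}_3(\mathbb C)$ with $\bar g^t\,\mathrm{diag}(1,1,-1)\,g=\mathrm{diag}(1,1,-1)$), $\mathfrak g$ its Lie algebra, complexification identified with $\mathfrak{sl}_3(\mathbb C)$; $E_{ij}$ matrix units. $K=\{k(\eta,\alpha,\beta)=\begin{pmatrix}\eta\alpha&\eta\beta&0\\-\eta\bar\beta&\eta\bar\alpha&0\\0&0&\eta^{-2}\end{pmatrix}\}$; its irreducible representations $\tau^h_p$ ($p\ge0$, $h\equiv p\bmod2$): $\tau^h_p(k(\eta,\alpha,\beta))=\eta^{-h}\tau_p\begin{pmatrix}\alpha&\beta\\-\bar\beta&\bar\alpha\end{pmatrix}$. In a $(\mathfrak g,K)$-module $V$: $V_{h,p}$ is the $\tau^h_p$-isotypic part and $V_{h,p,p}=\{v\in V_{h,p}:W_0v=-ipv\}$.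 Elements: $\mathrm{CK}_i=\mathrm{diag}(i,i,-2i)$, $W_0=\mathrm{diag}(i,-i,0)$, $Z_{12}=2E_{12}$, $Z_{21}=-2E_{21}$, $Z_{13}=E_{13}$, $Z_{31}=E_{31}$, $Z_{23}=E_{23}$, $Z_{32}=E_{32}$. Shift operators on $V_{h,p,p}$: $S^3_1=Z_{31}$, $S^{-3}_1=Z_{23}$, $S^3_{-1}=Z_{32}+\frac1{2(p+1)}Z_{12}Z_{31}$, $S^{-3}_{-1}=Z_{13}-\frac1{2(p+1)}Z_{12}Z_{23}$ (applied on $V_{h\pm3,p+1,p+1}$ with $p+1$ in place of $p$). A minimal vector is a nonzero $v\in V_{h,p,p}$ with $S^3_{-1}v=S^{-3}_{-1}v=0$. Central elements of $U(\mathfrak g)$: $C=-\frac13\mathrm{CK}_i^2+2i\,\mathrm{CK}_i-W_0^2+2iW_0-Z_{12}Z_{21}+4Z_{13}Z_{31}+4Z_{23}Z_{32}$ and $\Delta_3=-\frac i9\mathrm{CK}_i^3+i\,\mathrm{CK}_iW_0^2+iZ_{12}\mathrm{CK}_iZ_{21}+2iZ_{13}\mathrm{CK}_iZ_{31}-6iZ_{13}W_0Z_{31}-6Z_{13}Z_{21}Z_{32}+2iZ_{23}\mathrm{CK}_iZ_{32}+6iZ_{23}W_0Z_{32}+6Z_{23}Z_{12}Z_{31}-2\mathrm{CK}_i^2+2\mathrm{CK}_iW_0+24Z_{13}Z_{31}+24Z_{23}Z_{32}+8i\,\mathrm{CK}_i$. *)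

theory Defs
  imports "HOL-Analysis.Analysis"
begin

type_synonym cmat = "complex^3^3"

definition Emat :: "3 \<Rightarrow> 3 \<Rightarrow> cmat" where
  "Emat i j = (\<chi> a b. if a = i \<and> b = j then 1 else 0)"

definition diag3 :: "complex \<Rightarrow> complex \<Rightarrow> complex \<Rightarrow> cmat" where
  "diag3 x y z = (\<chi> a b. if a = b then (if a = 1 then x else if a = 2 then y else z) else 0)"

definition cscale :: "complex \<Rightarrow> cmat \<Rightarrow> cmat" where
  "cscale c X = (\<chi> a b. c * X$a$b)"

definition ctrans :: "cmat \<Rightarrow> cmat" where
  "ctrans X = (\<chi> a b. cnj (X$b$a))"

definition sl3 :: "cmat set" where
  "sl3 = {X. trace X = 0}"

definition CKi :: cmat where "CKi = diag3 \<i> \<i> (-2*\<i>)"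
definition W0 :: cmat where "W0 = diag3 \<i> (-\<i>) 0"
definition Z12 :: cmat where "Z12 = cscale 2 (Emat 1 2)"
definition Z21 :: cmat where "Z21 = cscale (-2) (Emat 2 1)"
definition Z13 :: cmat where "Z13 = Emat 1 3"
definition Z31 :: cmat where "Z31 = Emat 3 1"
definition Z23 :: cmat where "Z23 = Emat 2 3"
definition Z32 :: cmat where "Z32 = Emat 3 2"

definition kmat :: "complex \<Rightarrow> complex \<Rightarrow> complex \<Rightarrow> cmat" where
  "kmat \<eta> \<alpha> \<beta> = (\<chi> a b.
     if a = 1 \<and> b = 1 then \<eta> * \<alpha> else
     if a = 1 \<and> b = 2 then \<eta> * \<beta> else
     if a = 2 \<and> b = 1 then - \<eta> * cnj \<beta> else
     if a = 2 \<and> b = 2 then \<eta> * cnj \<alpha> else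
     if a = 3 \<and> b = 3 then inverse (\<eta>^2) else 0)"

definition Kpar :: "(complex \<times> complex \<times> complex) set" where
  "Kpar = {(\<eta>, \<alpha>, \<beta>). cmod \<eta> = 1 \<and> (cmod \<alpha>)^2 + (cmod \<beta>)^2 = 1}"

definition Kgrp :: "cmat set" where
  "Kgrp = (\<lambda>(\<eta>, \<alpha>, \<beta>). kmat \<eta> \<alpha> \<beta>) ` Kpar"

text \<open>Four one-parameter subgroups of K whose tangent vectors
  CK_i, W_0, E12 - E21, i(E12 + E21) form a real basis of the Lie algebra of K.\<close>
definition kcurve :: "nat \<Rightarrow> real \<Rightarrow> cmat" where
  "kcurve n t = (if n = 0 then kmat (cis t) 1 0
                 else if n = 1 then kmat 1 (cis t) 0
                 else if n = 2 then kmat 1 (complex_of_real (cos t)) (complex_of_real (sin t))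
                 else kmat 1 (complex_of_real (cos t)) (\<i> * complex_of_real (sin t)))"

definition ktangent :: "nat \<Rightarrow> cmat" where
  "ktangent n = (if n = 0 then CKi else if n = 1 then W0
                 else if n = 2 then Emat 1 2 - Emat 2 1
                 else cscale \<i> (Emat 1 2 + Emat 2 1))"

text \<open>tau_p = Sym^p of the standard representation of SU(2), realised on
  coefficient vectors f (f j = coefficient of e1^(p-j) e2^j, f j = 0 for j > p);
  g e1 = a e1 + c e2, g e2 = b e1 + d e2 for g = [[a,b],[c,d]].\<close>
definition Pspace :: "nat \<Rightarrow> (nat \<Rightarrow> complex) set" where
  "Pspace p = {f. \<forall>j>p. f j = 0}"

definition tau :: "nat \<Rightarrow> complex \<Rightarrow> complex \<Rightarrow> complex \<Rightarrow> complex
                   \<Rightarrow> (nat \<Rightarrow> complex) \<Rightarrow> (nat \<Rightarrow> complex)" where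
  "tau p a b c d f = (\<lambda>m. if m \<le> p then
     (\<Sum>j\<le>p. (\<Sum>r\<le>p - j. \<Sum>s\<le>j. if r + s = m then
        of_nat ((p - j) choose r) * of_nat (j choose s) * a^(p - j - r) * c^r * b^(j - s) * d^s
        else 0) * f j)
     else 0)"

definition tauh :: "int \<Rightarrow> nat \<Rightarrow> complex \<Rightarrow> complex \<Rightarrow> complex
                    \<Rightarrow> (nat \<Rightarrow> complex) \<Rightarrow> (nat \<Rightarrow> complex)" where
  "tauh h p \<eta> \<alpha> \<beta> f = (\<lambda>m. \<eta> powi (-h) * tau p \<alpha> \<beta> (- cnj \<beta>) (cnj \<alpha>) f m)"

text \<open>V is a complex vector space (carrier type 'v with scalar multiplication sc),
  rho the action of g_C = sl_3(C), piK the action of K.\<close>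
definition gK_module ::
  "(complex \<Rightarrow> 'v::ab_group_add \<Rightarrow> 'v) \<Rightarrow> (cmat \<Rightarrow> 'v \<Rightarrow> 'v) \<Rightarrow> (cmat \<Rightarrow> 'v \<Rightarrow> 'v) \<Rightarrow> bool" where
  "gK_module sc rho piK \<longleftrightarrow>
     vector_space sc \<and>
     \<comment> \<open>Lie algebra representation of sl_3(C)\<close>
     (\<forall>X\<in>sl3. Vector_Spaces.linear sc sc (rho X)) \<and>
     (\<forall>X\<in>sl3. \<forall>Y\<in>sl3. \<forall>w. rho (X + Y) w = rho X w + rho Y w) \<and>
     (\<forall>X\<in>sl3. \<forall>c w. rho (cscale c X) w = sc c (rho X w)) \<and>
     (\<forall>X\<in>sl3. \<forall>Y\<in>sl3. \<forall>w. rho (X ** Y - Y ** X) w = rho X (rho Y w) - rho Y (rho X w)) \<and>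
     \<comment> \<open>group representation of K\<close>
     (\<forall>k\<in>Kgrp. Vector_Spaces.linear sc sc (piK k)) \<and>
     (\<forall>w. piK (mat 1) w = w) \<and>
     (\<forall>k1\<in>Kgrp. \<forall>k2\<in>Kgrp. \<forall>w. piK (k1 ** k2) w = piK k1 (piK k2 w)) \<and>
     \<comment> \<open>compatibility with Ad\<close>
     (\<forall>k\<in>Kgrp. \<forall>X\<in>sl3. \<forall>w. piK k (rho X w) = rho (k ** X ** ctrans k) (piK k w)) \<and>
     \<comment> \<open>K-finiteness, continuity on finite-dimensional K-stable subspaces,
         and the derivative of piK on the Lie algebra of K equals rho\<close>
     (\<forall>v. \<exists>B. finite B \<and> \<not> module.dependent sc B \<and> v \<in> module.span sc B \<and>
        (\<forall>k\<in>Kgrp. piK k ` module.span sc B \<subseteq> module.span sc B) \<and>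
        (\<forall>w\<in>module.span sc B. \<exists>c :: cmat \<Rightarrow> 'v \<Rightarrow> complex.
            (\<forall>k\<in>Kgrp. piK k w = (\<Sum>b\<in>B. sc (c k b) b)) \<and>
            (\<forall>b\<in>B. continuous_on Kgrp (\<lambda>k. c k b)) \<and>
            (\<forall>n<4. \<exists>d :: 'v \<Rightarrow> complex.
               (\<forall>b\<in>B. ((\<lambda>t. c (kcurve n t) b) has_vector_derivative d b) (at 0)) \<and>
               rho (ktangent n) w = (\<Sum>b\<in>B. sc (d b) b))))"

definition tau_copy ::
  "(complex \<Rightarrow> 'v::ab_group_add \<Rightarrow> 'v) \<Rightarrow> (cmat \<Rightarrow> 'v \<Rightarrow> 'v) \<Rightarrow> int \<Rightarrow> nat \<Rightarrow> 'v set \<Rightarrow> bool" where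
  "tau_copy sc piK h p U \<longleftrightarrow>
     (\<exists>\<phi> :: (nat \<Rightarrow> complex) \<Rightarrow> 'v.
        bij_betw \<phi> (Pspace p) U \<and>
        (\<forall>f\<in>Pspace p. \<forall>g\<in>Pspace p. \<phi> (\<lambda>j. f j + g j) = \<phi> f + \<phi> g) \<and>
        (\<forall>f\<in>Pspace p. \<forall>c. \<phi> (\<lambda>j. c * f j) = sc c (\<phi> f)) \<and>
        (\<forall>(\<eta>, \<alpha>, \<beta>)\<in>Kpar. \<forall>f\<in>Pspace p.
            \<phi> (tauh h p \<eta> \<alpha> \<beta> f) = piK (kmat \<eta> \<alpha> \<beta>) (\<phi> f)))"

definition Viso :: "(complex \<Rightarrow> 'v::ab_group_add \<Rightarrow> 'v) \<Rightarrow> (cmat \<Rightarrow> 'v \<Rightarrow> 'v) \<Rightarrow> int \<Rightarrow> nat \<Rightarrow> 'v set" where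
  "Viso sc piK h p = module.span sc (\<Union> {U. tau_copy sc piK h p U})"

definition Vhpp :: "(complex \<Rightarrow> 'v::ab_group_add \<Rightarrow> 'v) \<Rightarrow> (cmat \<Rightarrow> 'v \<Rightarrow> 'v) \<Rightarrow> (cmat \<Rightarrow> 'v \<Rightarrow> 'v)
                    \<Rightarrow> int \<Rightarrow> nat \<Rightarrow> 'v set" where
  "Vhpp sc rho piK h p = {v \<in> Viso sc piK h p. rho W0 v = sc (- \<i> * of_nat p) v}"

section \<open>Shift operators (p is the K-type parameter of the space they act on)\<close>

definition S3p1 :: "(cmat \<Rightarrow> 'v \<Rightarrow> 'v) \<Rightarrow> 'v \<Rightarrow> 'v" where
  "S3p1 rho w = rho Z31 w"
definition Sm3p1 :: "(cmat \<Rightarrow> 'v \<Rightarrow> 'v) \<Rightarrow> 'v \<Rightarrow> 'v" where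
  "Sm3p1 rho w = rho Z23 w"
definition S3m1 :: "(complex \<Rightarrow> 'v::ab_group_add \<Rightarrow> 'v) \<Rightarrow> (cmat \<Rightarrow> 'v \<Rightarrow> 'v) \<Rightarrow> nat \<Rightarrow> 'v \<Rightarrow> 'v" where
  "S3m1 sc rho p w = rho Z32 w + sc (1 / (2 * (of_nat p + 1))) (rho Z12 (rho Z31 w))"
definition Sm3m1 :: "(complex \<Rightarrow> 'v::ab_group_add \<Rightarrow> 'v) \<Rightarrow> (cmat \<Rightarrow> 'v \<Rightarrow> 'v) \<Rightarrow> nat \<Rightarrow> 'v \<Rightarrow> 'v" where
  "Sm3m1 sc rho p w = rho Z13 w - sc (1 / (2 * (of_nat p + 1))) (rho Z12 (rho Z23 w))"

definition minimal_vector ::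
  "(complex \<Rightarrow> 'v::ab_group_add \<Rightarrow> 'v) \<Rightarrow> (cmat \<Rightarrow> 'v \<Rightarrow> 'v) \<Rightarrow> (cmat \<Rightarrow> 'v \<Rightarrow> 'v)
   \<Rightarrow> int \<Rightarrow> nat \<Rightarrow> 'v \<Rightarrow> bool" where
  "minimal_vector sc rho piK h p v \<longleftrightarrow>
     v \<noteq> 0 \<and> v \<in> Vhpp sc rho piK h p \<and> S3m1 sc rho p v = 0 \<and> Sm3m1 sc rho p v = 0"

definition Cop :: "(complex \<Rightarrow> 'v::ab_group_add \<Rightarrow> 'v) \<Rightarrow> (cmat \<Rightarrow> 'v \<Rightarrow> 'v) \<Rightarrow> 'v \<Rightarrow> 'v" where
  "Cop sc rho v =
      sc (-1/3) (rho CKi (rho CKi v)) + sc (2*\<i>) (rho CKi v)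
    - rho W0 (rho W0 v) + sc (2*\<i>) (rho W0 v)
    - rho Z12 (rho Z21 v) + sc 4 (rho Z13 (rho Z31 v)) + sc 4 (rho Z23 (rho Z32 v))"

definition Delta3 :: "(complex \<Rightarrow> 'v::ab_group_add \<Rightarrow> 'v) \<Rightarrow> (cmat \<Rightarrow> 'v \<Rightarrow> 'v) \<Rightarrow> 'v \<Rightarrow> 'v" where
  "Delta3 sc rho v =
      sc (-\<i>/9) (rho CKi (rho CKi (rho CKi v)))
    + sc \<i> (rho CKi (rho W0 (rho W0 v)))
    + sc \<i> (rho Z12 (rho CKi (rho Z21 v)))
    + sc (2*\<i>) (rho Z13 (rho CKi (rho Z31 v)))
    - sc (6*\<i>) (rho Z13 (rho W0 (rho Z31 v)))
    - sc 6 (rho Z13 (rho Z21 (rho Z32 v)))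
    + sc (2*\<i>) (rho Z23 (rho CKi (rho Z32 v)))
    + sc (6*\<i>) (rho Z23 (rho W0 (rho Z32 v)))
    + sc 6 (rho Z23 (rho Z12 (rho Z31 v)))
    - sc 2 (rho CKi (rho CKi v))
    + sc 2 (rho CKi (rho W0 v))
    + sc 24 (rho Z13 (rho Z31 v))
    + sc 24 (rho Z23 (rho Z32 v))
    + sc (8*\<i>) (rho CKi v)"

end

theory Submission
  imports Defs
begin

lemma trace_3: "trace (X::cmat) = X$1$1 + X$2$2 + X$3$3"
  by (simp add: trace_def sum_3)

lemmas mdefs = CKi_def W0_def Z12_def Z21_def Z13_def Z31_def Z23_def Z32_def Emat_def diag3_def cscale_def

lemma sl3_basis: "CKi \<in> sl3" "W0 \<in> sl3" "Z12 \<in> sl3" "Z21 \<in> sl3" "Z13 \<in> sl3" "Z31 \<in> sl3" "Z23 \<in> sl3" "Z32 \<in> sl3"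
  by (simp_all add: sl3_def trace_3 mdefs)

lemma sl3_cscale: "X \<in> sl3 \<Longrightarrow> cscale c X \<in> sl3"
  by (simp add: sl3_def trace_3 cscale_def) (metis distrib_left mult_zero_right)

lemma ktangent_sl3: "ktangent n \<in> sl3"
  by (simp add: ktangent_def sl3_def trace_3 mdefs)

lemma meq: "(X::cmat) = Y \<longleftrightarrow> (\<forall>i j. X$i$j = Y$i$j)"
  by (simp add: vec_eq_iff)

lemma br1: "Z23 ** Z12 - Z12 ** Z23 = cscale (-2) Z13"
  by (simp add: meq forall_3 matrix_matrix_mult_def sum_3 mdefs)
lemma br2: "Z32 ** Z23 - Z23 ** Z32 = cscale (\<i>/2) CKi + cscale (-\<i>/2) W0"
  by (simp add: meq forall_3 matrix_matrix_mult_def sum_3 mdefs)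
lemma br3: "Z31 ** Z23 - Z23 ** Z31 = cscale (1/2) Z21"
  by (simp add: meq forall_3 matrix_matrix_mult_def sum_3 mdefs)
lemma br4: "CKi ** Z31 - Z31 ** CKi = cscale (-3*\<i>) Z31"
  by (simp add: meq forall_3 matrix_matrix_mult_def sum_3 mdefs)
lemma br5: "W0 ** Z31 - Z31 ** W0 = cscale (-\<i>) Z31"
  by (simp add: meq forall_3 matrix_matrix_mult_def sum_3 mdefs)
lemma br6: "Z21 ** Z32 - Z32 ** Z21 = cscale 2 Z31"
  by (simp add: meq forall_3 matrix_matrix_mult_def sum_3 mdefs)
lemma br7: "CKi ** Z32 - Z32 ** CKi = cscale (-3*\<i>) Z32"
  by (simp add: meq forall_3 matrix_matrix_mult_def sum_3 mdefs)
lemma br8: "W0 ** Z32 - Z32 ** W0 = cscale \<i> Z32"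
  by (simp add: meq forall_3 matrix_matrix_mult_def sum_3 mdefs)
lemma br9: "W0 ** Z21 - Z21 ** W0 = cscale (-2*\<i>) Z21"
  by (simp add: meq forall_3 matrix_matrix_mult_def sum_3 mdefs)
lemma Z21_tang: "Z21 = ktangent 2 + cscale \<i> (ktangent 3)"
  by (simp add: meq forall_3 ktangent_def mdefs)
lemma tang01: "ktangent 0 = CKi" "ktangent 1 = W0"
  by (simp_all add: ktangent_def)

definition LC3 :: "(complex \<Rightarrow> 'v::ab_group_add \<Rightarrow> 'v) \<Rightarrow> 'v \<times> 'v \<times> 'v \<Rightarrow> complex \<Rightarrow> complex \<Rightarrow> complex \<Rightarrow> 'v"
  where "LC3 sc T a b c = sc a (fst T) + sc b (fst (snd T)) + sc c (snd (snd T))"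

lemma re_pos_nz: "0 < Re (x::complex) \<Longrightarrow> x \<noteq> 0" by auto

locale gk =
  fixes sc :: "complex \<Rightarrow> 'v::ab_group_add \<Rightarrow> 'v" and rho piK :: "cmat \<Rightarrow> 'v \<Rightarrow> 'v"
  assumes gK: "gK_module sc rho piK"
begin

lemma VS: "vector_space sc" using gK by (simp add: gK_module_def)

sublocale V: vector_space sc by (rule VS)

lemma LIN: "X \<in> sl3 \<Longrightarrow> Vector_Spaces.linear sc sc (rho X)"
  using gK by (simp add: gK_module_def)

lemma rho_sc: "X \<in> sl3 \<Longrightarrow> rho X (sc c w) = sc c (rho X w)"
  using LIN[of X] unfolding Vector_Spaces.linear_def module_hom_def module_hom_axioms_def by auto
lemma rho_add: "X \<in> sl3 \<Longrightarrow> rho X (w + u) = rho X w + rho X u"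
  using LIN[of X] unfolding Vector_Spaces.linear_def module_hom_def module_hom_axioms_def by auto
lemma rho_zero: "X \<in> sl3 \<Longrightarrow> rho X 0 = 0"
  using rho_sc[of X 0 0] by simp
lemma rho_neg: "X \<in> sl3 \<Longrightarrow> rho X (- w) = - rho X w"
  using rho_sc[of X "-1" w] by (simp add: V.scale_minus_left)
lemma rho_diff: "X \<in> sl3 \<Longrightarrow> rho X (w - u) = rho X w - rho X u"
  using rho_add[of X w "-u"] rho_neg[of X u] by simp

lemma rho_cscale: "X \<in> sl3 \<Longrightarrow> rho (cscale c X) w = sc c (rho X w)"
  using gK by (simp add: gK_module_def)
lemma rho_plus: "X \<in> sl3 \<Longrightarrow> Y \<in> sl3 \<Longrightarrow> rho (X + Y) w = rho X w + rho Y w"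
  using gK by (simp add: gK_module_def)
lemma rho_br: "X \<in> sl3 \<Longrightarrow> Y \<in> sl3 \<Longrightarrow> rho X (rho Y w) = rho Y (rho X w) + rho (X ** Y - Y ** X) w"
proof -
  assume "X \<in> sl3" "Y \<in> sl3"
  moreover have "\<forall>X\<in>sl3. \<forall>Y\<in>sl3. \<forall>w. rho (X ** Y - Y ** X) w = rho X (rho Y w) - rho Y (rho X w)"
    using gK by (simp add: gK_module_def)
  ultimately have H: "rho (X ** Y - Y ** X) w = rho X (rho Y w) - rho Y (rho X w)"
    by blast
  show ?thesis by (simp add: H)
qed

lemma comm: "X \<in> sl3 \<Longrightarrow> Y \<in> sl3 \<Longrightarrow> X ** Y - Y ** X = cscale c Z \<Longrightarrow> Z \<in> sl3 \<Longrightarrow>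
   rho X (rho Y w) = rho Y (rho X w) + sc c (rho Z w)"
  using rho_br[of X Y w] rho_cscale[of Z c w] by simp

lemma comm_eig: "X \<in> sl3 \<Longrightarrow> Y \<in> sl3 \<Longrightarrow> X ** Y - Y ** X = cscale c Y \<Longrightarrow> rho X w = sc \<mu> w \<Longrightarrow>
   rho X (rho Y w) = sc (\<mu> + c) (rho Y w)"
  using comm[of X Y c Y w] rho_sc[of Y \<mu> w] by (simp add: V.scale_left_distrib)

lemma LC_add: "LC3 sc T a b c + LC3 sc T a' b' c' = LC3 sc T (a+a') (b+b') (c+c')"
  by (simp only: LC3_def V.scale_left_distrib add_ac)

lemma LC_neg: "- LC3 sc T a b c = LC3 sc T (-a) (-b) (-c)"
  by (simp only: LC3_def V.scale_minus_left minus_add_distrib add_ac)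
lemma LC_diff: "LC3 sc T a b c - LC3 sc T a' b' c' = LC3 sc T (a-a') (b-b') (c-c')"
  by (simp only: diff_conv_add_uminus LC_neg LC_add)
lemma LC_scale: "sc k (LC3 sc T a b c) = LC3 sc T (k*a) (k*b) (k*c)"
  by (simp add: LC3_def V.scale_right_distrib)
lemma LC_cong: "a = a' \<Longrightarrow> b = b' \<Longrightarrow> c = c' \<Longrightarrow> LC3 sc T a b c = LC3 sc T a' b' c'" by simp

lemmas sl3s = sl3_basis sl3_cscale

lemma algebra_part:
  fixes h :: int and p :: nat and v :: 'v
  assumes CKv: "rho CKi v = sc (- \<i> * of_int h) v"
    and Wv: "rho W0 v = sc (- \<i> * of_nat p) v"
    and Z21v: "rho Z21 v = 0"
    and S3: "S3m1 sc rho p v = 0" and Sm: "Sm3m1 sc rho p v = 0"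
  shows "(sc (2 * (of_nat p + 1)) (rho Z32 v) = - rho Z12 (rho Z31 v)) \<and>
         (sc (2 * (of_nat p + 1)) (rho Z13 v) = rho Z12 (rho Z23 v)) \<and>
         (Sm3m1 sc rho (p + 1) (S3p1 rho v) - sc (of_nat p + 1) (S3m1 sc rho (p + 1) (Sm3p1 rho v))
           = sc ((of_nat p - of_int h) * (of_nat p + 1) / 2) v) \<and>
         (Cop sc rho v = sc ((of_int h)^2 / 3 + (of_nat p)^2 + 2 * of_int h + 2 * of_nat p) v
           + sc (4 * (of_nat p + 2) / (of_nat p + 1)) (Sm3m1 sc rho (p + 1) (S3p1 rho v))) \<and>
         (Delta3 sc rho v = sc (of_int h * (of_int h + 3 * of_nat p + 12) * (of_int h - 3 * of_nat p + 6) / 9) v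
           + sc (2 * (of_nat p + 2) * (of_int h - 3 * of_nat p + 6) / (of_nat p + 1)) (Sm3m1 sc rho (p + 1) (S3p1 rho v)))"
proof -
  have p1: "(of_nat p + 1 :: complex) \<noteq> 0" by (metis of_nat_Suc of_nat_eq_0_iff nat.distinct(1) add.commute)
  have p2: "(of_nat p + 2 :: complex) \<noteq> 0" 
    by (metis add_2_eq_Suc' of_nat_Suc of_nat_eq_0_iff nat.distinct(1) of_nat_add of_nat_numeral)
  have Z32v: "rho Z32 v = - sc (1 / (2 * (of_nat p + 1))) (rho Z12 (rho Z31 v))"
    using S3 unfolding S3m1_def by (simp add: eq_neg_iff_add_eq_0)
  have Z13v: "rho Z13 v = sc (1 / (2 * (of_nat p + 1))) (rho Z12 (rho Z23 v))"
    using Sm unfolding Sm3m1_def by simp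
  have p1': "2*(of_nat p + 1) \<noteq> (0::complex)" using p1 by (metis mult_eq_0_iff zero_neq_numeral)
  have k: "2*(of_nat p + 1) * (1/(2*(of_nat p+1))) = (1::complex)"
    by (simp only: times_divide_eq_right mult_1_right divide_self[OF p1'])
  have i: "sc (2 * (of_nat p + 1)) (rho Z32 v) = - rho Z12 (rho Z31 v)"
    by (simp only: Z32v V.scale_minus_right V.scale_scale k V.scale_one)
  have ii: "sc (2 * (of_nat p + 1)) (rho Z13 v) = rho Z12 (rho Z23 v)"
    by (simp only: Z13v V.scale_minus_right V.scale_scale k V.scale_one)
  define d1 where "d1 = 1 / (of_nat p + 1 :: complex)"
  define d2 where "d2 = 1 / (of_nat p + 2 :: complex)"
  have hd1: "d1 * (of_nat p + 1) = 1" using p1 by (simp add: d1_def)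
  have hd2: "d2 * (of_nat p + 2) = 1" using p2 by (simp add: d2_def)
  have r0: "1 / (2 * (of_nat p + 1)) = (d1 / 2 :: complex)" by (simp add: d1_def)
  have r1: "1 / (2 * (of_nat (p + 1) + 1)) = (d2 / 2 :: complex)" by (simp add: d2_def add.assoc)
  have r4: "4 * (of_nat p + 2) / (of_nat p + 1) = 4 * (of_nat p + 2) * (d1::complex)" by (simp add: d1_def)
  have r5: "2 * (of_nat p + 2) * (of_int h - 3 * of_nat p + 6) / (of_nat p + 1) =
     2 * (of_nat p + 2) * (of_int h - 3 * of_nat p + 6) * (d1::complex)" by (simp add: d1_def)
  define A where "A = rho Z13 (rho Z31 v)"
  define X where "X = rho Z12 (rho Z23 (rho Z31 v))"
  define T where "T = (v, A, X)"
  have atoms: "v = LC3 sc T 1 0 0" "A = LC3 sc T 0 1 0" "X = LC3 sc T 0 0 1"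
    by (simp_all add: LC3_def T_def)
  have c1: "rho Z23 (rho Z12 w) = rho Z12 (rho Z23 w) + sc (-2) (rho Z13 w)" for w
    by (rule comm[OF _ _ br1]) (simp_all add: sl3_basis)
  have c2: "rho Z32 (rho Z23 w) = rho Z23 (rho Z32 w) + (sc (\<i>/2) (rho CKi w) + sc (-\<i>/2) (rho W0 w))" for w
  proof -
    have "rho Z32 (rho Z23 w) = rho Z23 (rho Z32 w) + rho (Z32 ** Z23 - Z23 ** Z32) w"
      by (rule rho_br) (simp_all add: sl3_basis)
    also have "rho (Z32 ** Z23 - Z23 ** Z32) w = sc (\<i>/2) (rho CKi w) + sc (-\<i>/2) (rho W0 w)"
      by (simp only: br2 rho_plus sl3_basis sl3_cscale rho_cscale)
    finally show ?thesis .
  qed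
  have c3: "rho Z31 (rho Z23 v) = rho Z23 (rho Z31 v)"
    using comm[OF _ _ br3, of v] by (simp add: sl3_basis Z21v)
  have c4: "rho CKi (rho Z31 v) = sc (- \<i> * of_int h + - 3 * \<i>) (rho Z31 v)"
    by (rule comm_eig[OF _ _ br4 CKv]) (simp_all add: sl3_basis)
  have c5: "rho W0 (rho Z31 v) = sc (- \<i> * of_nat p + - \<i>) (rho Z31 v)"
    by (rule comm_eig[OF _ _ br5 Wv]) (simp_all add: sl3_basis)
  have c6: "rho Z21 (rho Z32 v) = sc 2 (rho Z31 v)"
    using comm[OF _ _ br6, of v] by (simp add: sl3_basis Z21v rho_zero)
  have c7: "rho CKi (rho Z32 v) = sc (- \<i> * of_int h + - 3 * \<i>) (rho Z32 v)"
    by (rule comm_eig[OF _ _ br7 CKv]) (simp_all add: sl3_basis)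
  have c8: "rho W0 (rho Z32 v) = sc (- \<i> * of_nat p + \<i>) (rho Z32 v)"
    by (rule comm_eig[OF _ _ br8 Wv]) (simp_all add: sl3_basis)
  have R: "rho Z23 (rho Z32 v) = LC3 sc T 0 d1 (- d1 / 2)"
  proof -
    have "rho Z23 (rho Z32 v) = - sc (1 / (2 * (of_nat p + 1))) (rho Z23 (rho Z12 (rho Z31 v)))"
      by (simp add: Z32v rho_neg rho_sc sl3_basis)
    also have "\<dots> = - sc (1 / (2 * (of_nat p + 1))) (X + sc (-2) A)"
      by (simp only: c1 X_def A_def)
    also have "\<dots> = LC3 sc T 0 d1 (- d1 / 2)"
      apply (simp only: atoms(2,3) LC_scale LC_add LC_neg)
      apply (rule LC_cong)
      by (simp_all only: r0) simp_all
    finally show ?thesis .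
  qed
  note ph1 = S3p1_def Sm3p1_def S3m1_def Sm3m1_def Cop_def Delta3_def CKv Wv Z21v
     rho_sc[OF sl3_basis(1)] rho_sc[OF sl3_basis(2)] rho_sc[OF sl3_basis(3)] rho_sc[OF sl3_basis(4)]
     rho_sc[OF sl3_basis(5)] rho_sc[OF sl3_basis(6)] rho_sc[OF sl3_basis(7)] rho_sc[OF sl3_basis(8)]
     rho_add[OF sl3_basis(1)] rho_add[OF sl3_basis(2)] rho_add[OF sl3_basis(3)] rho_add[OF sl3_basis(4)]
     rho_add[OF sl3_basis(5)] rho_add[OF sl3_basis(6)] rho_add[OF sl3_basis(7)] rho_add[OF sl3_basis(8)]
     rho_zero[OF sl3_basis(1)] rho_zero[OF sl3_basis(2)] rho_zero[OF sl3_basis(3)] rho_zero[OF sl3_basis(4)]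
     rho_zero[OF sl3_basis(5)] rho_zero[OF sl3_basis(6)] rho_zero[OF sl3_basis(7)] rho_zero[OF sl3_basis(8)]
     c1 c2 c3 c4 c5 c6 c7 c8 R A_def[symmetric] X_def[symmetric] V.scale_scale V.scale_zero_right
  have nz1: "8 + (of_nat p * 12 + of_nat p * (of_nat p * 4)) \<noteq> (0::complex)"
  proof -
    have "(8 + (of_nat p * 12 + of_nat p * (of_nat p * 4)) :: complex) = of_nat (8 + (p*12 + p*(p*4)))" by simp
    then show ?thesis by (metis of_nat_eq_0_iff add_is_0 zero_neq_numeral)
  qed
  have nz2: "4 + (of_nat p * 6 + of_nat p * (of_nat p * 2)) \<noteq> (0::complex)"
  proof -
    have "(4 + (of_nat p * 6 + of_nat p * (of_nat p * 2)) :: complex) = of_nat (4 + (p*6 + p*(p*2)))" by simp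
    then show ?thesis by (metis of_nat_eq_0_iff add_is_0 zero_neq_numeral)
  qed
  note ph2 = atoms LC_add LC_diff LC_neg LC_scale minus_zero diff_zero add_0_right add_0_left
  have iii: "Sm3m1 sc rho (p + 1) (S3p1 rho v) - sc (of_nat p + 1) (S3m1 sc rho (p + 1) (Sm3p1 rho v))
           = sc ((of_nat p - of_int h) * (of_nat p + 1) / 2) v"
    apply (simp only: ph1)
    apply (simp only: ph2)
    apply (rule LC_cong)
    apply (simp_all only: r1 r4 r5)
    apply (simp_all add: field_simps power2_eq_square)
    using hd1 hd2 by algebra+
  have iv: "Cop sc rho v = sc ((of_int h)^2 / 3 + (of_nat p)^2 + 2 * of_int h + 2 * of_nat p) v
           + sc (4 * (of_nat p + 2) / (of_nat p + 1)) (Sm3m1 sc rho (p + 1) (S3p1 rho v))"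
    apply (simp only: ph1)
    apply (simp only: ph2)
    apply (rule LC_cong)
    apply (simp_all only: r1 r4 r5)
    apply (simp_all add: field_simps power2_eq_square)
    using hd1 hd2 by algebra+
  have v: "Delta3 sc rho v = sc (of_int h * (of_int h + 3 * of_nat p + 12) * (of_int h - 3 * of_nat p + 6) / 9) v
           + sc (2 * (of_nat p + 2) * (of_int h - 3 * of_nat p + 6) / (of_nat p + 1)) (Sm3m1 sc rho (p + 1) (S3p1 rho v))"
    apply (simp only: ph1)
    apply (simp only: ph2)
    apply (rule LC_cong)
    apply (simp_all only: r1 r4 r5)
    apply (simp_all add: field_simps power2_eq_square)
    using hd1 hd2 by algebra+
  show ?thesis using i ii iii iv v by blast
qed
end

definition delta :: "nat \<Rightarrow> nat \<Rightarrow> complex" where "delta m = (\<lambda>j. if j = m then 1 else 0)"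

lemma kcurve_par: "\<exists>\<eta> \<alpha> \<beta>. (\<eta>, \<alpha>, \<beta>) \<in> Kpar \<and> kcurve n t = kmat \<eta> \<alpha> \<beta>"
proof -
  have sc: "(cmod (complex_of_real (cos t)))\<^sup>2 + (cmod (complex_of_real (sin t)))\<^sup>2 = 1"
    by simp
  have sc2: "(cmod (complex_of_real (cos t)))\<^sup>2 + (cmod (\<i> * complex_of_real (sin t)))\<^sup>2 = 1"
    by (simp add: norm_mult)
  consider "n = 0" | "n = 1" | "n = 2" | "n \<noteq> 0 \<and> n \<noteq> 1 \<and> n \<noteq> 2" by blast
  then show ?thesis
  proof cases
    case 1
    show ?thesis by (rule exI[of _ "cis t"], rule exI[of _ 1], rule exI[of _ 0]) (simp add: 1 kcurve_def Kpar_def)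
  next
    case 2
    show ?thesis by (rule exI[of _ 1], rule exI[of _ "cis t"], rule exI[of _ 0]) (simp add: 2 kcurve_def Kpar_def)
  next
    case 3
    show ?thesis by (rule exI[of _ 1], rule exI[of _ "complex_of_real (cos t)"], rule exI[of _ "complex_of_real (sin t)"])
       (use sc in \<open>simp add: 3 kcurve_def Kpar_def\<close>)
  next
    case 4
    show ?thesis by (rule exI[of _ 1], rule exI[of _ "complex_of_real (cos t)"], rule exI[of _ "\<i> * complex_of_real (sin t)"])
       (use sc2 4 in \<open>simp add: kcurve_def Kpar_def\<close>)
  qed
qed

lemma kcurve_K: "kcurve n t \<in> Kgrp"
  using kcurve_par[of n t] unfolding Kgrp_def by force

lemma tau_diag: "tau p a 0 0 d f m = (if m \<le> p then a^(p-m) * d^m * f m else 0)"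
proof (cases "m \<le> p")
  case True
  have inner: "(\<Sum>r\<le>p - j. \<Sum>s\<le>j. if r + s = m then
        of_nat ((p - j) choose r) * of_nat (j choose s) * a^(p - j - r) * 0^r * 0^(j - s) * d^s
        else 0) = (if j = m then a^(p-m) * d^m else 0)" if "j \<le> p" for j
  proof -
    have "(\<Sum>r\<le>p - j. \<Sum>s\<le>j. if r + s = m then
        of_nat ((p - j) choose r) * of_nat (j choose s) * a^(p - j - r) * 0^r * 0^(j - s) * d^s
        else 0) = (\<Sum>r\<le>p - j. \<Sum>s\<le>j. if r = 0 \<and> s = j \<and> j = m then a^(p-j) * d^j else 0)"
      by (intro sum.cong refl) (auto simp: power_0_left)
    also have "\<dots> = (\<Sum>r\<le>p - j. if r = 0 \<and> j = m then a^(p-j) * d^j else 0)"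
      by (intro sum.cong refl) (auto simp: sum.delta')
    also have "\<dots> = (if j = m then a^(p-m) * d^m else 0)"
      by (simp add: sum.delta')
    finally show ?thesis .
  qed
  have "tau p a 0 0 d f m = (\<Sum>j\<le>p. (if j = m then a^(p-m) * d^m else 0) * f j)"
    unfolding tau_def using True inner by (auto intro!: sum.cong)
  also have "\<dots> = (\<Sum>j\<le>p. if j = m then a^(p-m) * d^m * f m else 0)"
    by (intro sum.cong) auto
  also have "\<dots> = a^(p-m) * d^m * f m" using True by simp
  finally show ?thesis using True by simp
qed (simp add: tau_def)

lemma tau_Pspace: "tau p a b c d f \<in> Pspace p"
  by (simp add: Pspace_def tau_def)
lemma tauh_Pspace: "tauh h p e a b f \<in> Pspace p"
  using tau_Pspace by (simp add: Pspace_def tauh_def)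

lemma cis_deriv: "((\<lambda>t. cis (c * t) * z) has_vector_derivative (\<i> * of_real c * z)) (at 0)"
proof -
  have "((\<lambda>t. cis (c * t)) has_derivative (\<lambda>s. (c * s) *\<^sub>R (\<i> * cis (c * 0)))) (at 0)"
    by (intro has_derivative_cis has_derivative_mult_right has_derivative_ident)
  then have "((\<lambda>t. cis (c * t)) has_vector_derivative (\<i> * of_real c)) (at 0)"
    unfolding has_vector_derivative_def
    by (simp add: scaleR_conv_of_real algebra_simps)
  then show ?thesis by (intro has_vector_derivative_mult_left)
qed

lemma dcos: "(\<lambda>t. complex_of_real (cos t)) differentiable (at x)"
  by (rule differentiableI_vector, rule has_vector_derivative_of_real, rule DERIV_cos)
lemma dsin: "(\<lambda>t. complex_of_real (sin t)) differentiable (at x)"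
  by (rule differentiableI_vector, rule has_vector_derivative_of_real, rule DERIV_sin)

lemma dif_if: "(P \<Longrightarrow> f differentiable F) \<Longrightarrow> (\<not>P \<Longrightarrow> g differentiable F) \<Longrightarrow> (\<lambda>x. if P then f x else g x) differentiable F"
  by (cases P) auto

lemma tau_differentiable:
  assumes "a differentiable (at 0)" "b differentiable (at 0)" "c differentiable (at 0)" "d differentiable (at 0)"
  shows "(\<lambda>t. tau p (a t) (b t) (c t) (d t) f m) differentiable (at (0::real))"
proof (cases "m \<le> p")
  case True
  then show ?thesis unfolding tau_def using assms
    by (simp, intro differentiable_sum ballI differentiable_mult differentiable_power dif_if
         differentiable_const assms finite_atMost)
qed (simp add: tau_def)

lemma curve2_diff: "(\<lambda>t. tauh h p 1 (complex_of_real (cos t)) (complex_of_real (sin t)) f m) differentiable (at 0)"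
proof -
  have "(\<lambda>t. tau p (complex_of_real (cos t)) (complex_of_real (sin t)) (- complex_of_real (sin t)) (complex_of_real (cos t)) f m) differentiable (at 0)"
    by (intro tau_differentiable dcos dsin differentiable_minus)
  then show ?thesis by (simp add: tauh_def)
qed

lemma curve3_diff: "(\<lambda>t. tauh h p 1 (complex_of_real (cos t)) (\<i> * complex_of_real (sin t)) f m) differentiable (at 0)"
proof -
  have "(\<lambda>t. tau p (complex_of_real (cos t)) (\<i> * complex_of_real (sin t)) (\<i> * complex_of_real (sin t)) (complex_of_real (cos t)) f m) differentiable (at 0)"
    by (intro tau_differentiable dcos dsin differentiable_mult differentiable_const)
  then show ?thesis by (simp add: tauh_def)
qed

lemma curve0_deriv:
  assumes "f \<in> Pspace p"
  shows "((\<lambda>t. tauh h p (cis t) 1 0 f m) has_vector_derivative (- \<i> * of_int h * f m)) (at 0)"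
proof -
  have e: "tauh h p (cis t) 1 0 f m = cis (of_int (- h) * t) * f m" for t
    using assms by (simp add: tauh_def tau_diag cis_power_int Pspace_def)
  show ?thesis unfolding e using cis_deriv[of "of_int (-h)" "f m"] by simp
qed

lemma curve1_deriv:
  assumes "f \<in> Pspace p"
  shows "((\<lambda>t. tauh h p 1 (cis t) 0 f m) has_vector_derivative (\<i> * (of_nat p - 2 * of_nat m) * f m)) (at 0)"
proof (cases "m \<le> p")
  case True
  have e: "tauh h p 1 (cis t) 0 f m = cis ((real (p - m) - real m) * t) * f m" for t
  proof -
    have "cis t ^ (p - m) * cnj (cis t) ^ m = cis ((real (p - m) - real m) * t)"
      apply (simp only: cis_cnj Complex.DeMoivre cis_mult)
      apply (rule arg_cong[where f=cis])
      by (simp add: algebra_simps)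
    then show ?thesis using True by (simp add: tauh_def tau_diag)
  qed
  show ?thesis unfolding e using cis_deriv[of "real (p - m) - real m" "f m"] True
    by (simp add: of_nat_diff)
next
  case False
  then show ?thesis using assms by (simp add: tauh_def tau_def Pspace_def)
qed

context gk begin

lemma KF: "\<forall>v. \<exists>B. finite B \<and> \<not> module.dependent sc B \<and> v \<in> module.span sc B \<and>
        (\<forall>k\<in>Kgrp. piK k ` module.span sc B \<subseteq> module.span sc B) \<and>
        (\<forall>w\<in>module.span sc B. \<exists>c :: cmat \<Rightarrow> 'v \<Rightarrow> complex.
            (\<forall>k\<in>Kgrp. piK k w = (\<Sum>b\<in>B. sc (c k b) b)) \<and>
            (\<forall>b\<in>B. continuous_on Kgrp (\<lambda>k. c k b)) \<and>
            (\<forall>n<4. \<exists>d :: 'v \<Rightarrow> complex.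
               (\<forall>b\<in>B. ((\<lambda>t. c (kcurve n t) b) has_vector_derivative d b) (at 0)) \<and>
               rho (ktangent n) w = (\<Sum>b\<in>B. sc (d b) b)))"
  using gK unfolding gK_module_def by (elim conjE) assumption

lemma deriv_lemma:
  assumes n: "n < 4"
    and M: "finite M"
    and hw: "\<And>t. piK (kcurve n t) w = (\<Sum>m\<in>M. sc (g t m) (e m))"
    and hd: "\<And>m. m \<in> M \<Longrightarrow> ((\<lambda>t. g t m) has_vector_derivative g' m) (at 0)"
  shows "rho (ktangent n) w = (\<Sum>m\<in>M. sc (g' m) (e m))"
proof -
  have "\<exists>B. finite B \<and> \<not> V.dependent B \<and> w \<in> V.span B \<and>
        (\<forall>k\<in>Kgrp. piK k ` V.span B \<subseteq> V.span B) \<and>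
        (\<forall>w\<in>V.span B. \<exists>c :: cmat \<Rightarrow> 'v \<Rightarrow> complex.
            (\<forall>k\<in>Kgrp. piK k w = (\<Sum>b\<in>B. sc (c k b) b)) \<and>
            (\<forall>b\<in>B. continuous_on Kgrp (\<lambda>k. c k b)) \<and>
            (\<forall>n<4. \<exists>d :: 'v \<Rightarrow> complex.
               (\<forall>b\<in>B. ((\<lambda>t. c (kcurve n t) b) has_vector_derivative d b) (at 0)) \<and>
               rho (ktangent n) w = (\<Sum>b\<in>B. sc (d b) b)))"
    by (rule spec[OF KF])
  then obtain B where BB: "finite B \<and> \<not> V.dependent B \<and> w \<in> V.span B \<and>
        (\<forall>k\<in>Kgrp. piK k ` V.span B \<subseteq> V.span B) \<and>
        (\<forall>w\<in>V.span B. \<exists>c :: cmat \<Rightarrow> 'v \<Rightarrow> complex.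
            (\<forall>k\<in>Kgrp. piK k w = (\<Sum>b\<in>B. sc (c k b) b)) \<and>
            (\<forall>b\<in>B. continuous_on Kgrp (\<lambda>k. c k b)) \<and>
            (\<forall>n<4. \<exists>d :: 'v \<Rightarrow> complex.
               (\<forall>b\<in>B. ((\<lambda>t. c (kcurve n t) b) has_vector_derivative d b) (at 0)) \<and>
               rho (ktangent n) w = (\<Sum>b\<in>B. sc (d b) b)))" ..
  note B1 = BB[THEN conjunct1]
  note B2 = BB[THEN conjunct2, THEN conjunct1]
  note B3 = BB[THEN conjunct2, THEN conjunct2, THEN conjunct1]
  note W = BB[THEN conjunct2, THEN conjunct2, THEN conjunct2, THEN conjunct2]
  have "\<exists>c :: cmat \<Rightarrow> 'v \<Rightarrow> complex.
            (\<forall>k\<in>Kgrp. piK k w = (\<Sum>b\<in>B. sc (c k b) b)) \<and>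
            (\<forall>b\<in>B. continuous_on Kgrp (\<lambda>k. c k b)) \<and>
            (\<forall>n<4. \<exists>d :: 'v \<Rightarrow> complex.
               (\<forall>b\<in>B. ((\<lambda>t. c (kcurve n t) b) has_vector_derivative d b) (at 0)) \<and>
               rho (ktangent n) w = (\<Sum>b\<in>B. sc (d b) b))"
    by (rule bspec[OF W B3])
  then obtain c where CC: "(\<forall>k\<in>Kgrp. piK k w = (\<Sum>b\<in>B. sc (c k b) b)) \<and>
            (\<forall>b\<in>B. continuous_on Kgrp (\<lambda>k. c k b)) \<and>
            (\<forall>n<4. \<exists>d :: 'v \<Rightarrow> complex.
               (\<forall>b\<in>B. ((\<lambda>t. c (kcurve n t) b) has_vector_derivative d b) (at 0)) \<and>
               rho (ktangent n) w = (\<Sum>b\<in>B. sc (d b) b))" ..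
  note c1 = CC[THEN conjunct1]
  note CCd = CC[THEN conjunct2, THEN conjunct2, rule_format, OF n]
  from CCd obtain d where DD: "(\<forall>b\<in>B. ((\<lambda>t. c (kcurve n t) b) has_vector_derivative d b) (at 0)) \<and>
               rho (ktangent n) w = (\<Sum>b\<in>B. sc (d b) b)" ..
  note d1 = DD[THEN conjunct1] and d2 = DD[THEN conjunct2]
  define Bf where "Bf = V.extend_basis B"
  have indBf: "V.independent Bf" and spanBf: "V.span Bf = UNIV" and BBf: "B \<subseteq> Bf"
    using B2 by (simp_all add: Bf_def V.independent_extend_basis V.extend_basis_superset)
  define r where "r = V.representation Bf"
  have inspan: "x \<in> V.span Bf" for x using spanBf by simp
  have r_sum: "r (\<Sum>i\<in>I. sc (a i) (x i)) b0 = (\<Sum>i\<in>I. a i * r (x i) b0)" for I a x b0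
    unfolding r_def
    by (simp add: V.representation_sum[OF indBf] V.representation_scale[OF indBf] inspan V.span_scale)
  have rB: "r (\<Sum>b\<in>B. sc (f b) b) b0 = (if b0 \<in> B then f b0 else 0)" for f b0
  proof -
    have "r (\<Sum>b\<in>B. sc (f b) b) b0 = (\<Sum>b\<in>B. f b * r b b0)" by (rule r_sum)
    also have "\<dots> = (\<Sum>b\<in>B. if b = b0 then f b else 0)"
      using BBf by (intro sum.cong refl) (auto simp: r_def V.representation_basis[OF indBf])
    also have "\<dots> = (if b0 \<in> B then f b0 else 0)" using B1 by (simp add: sum.delta')
    finally show ?thesis .
  qed
  have key: "r (rho (ktangent n) w) b0 = r (\<Sum>m\<in>M. sc (g' m) (e m)) b0" for b0
  proof -
    have eqf: "(\<lambda>t. if b0 \<in> B then c (kcurve n t) b0 else 0) = (\<lambda>t. \<Sum>m\<in>M. g t m * r (e m) b0)"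
    proof
      fix t
      have "r (piK (kcurve n t) w) b0 = (if b0 \<in> B then c (kcurve n t) b0 else 0)"
        using c1 kcurve_K[of n t] rB by simp
      moreover have "r (piK (kcurve n t) w) b0 = (\<Sum>m\<in>M. g t m * r (e m) b0)"
        by (simp add: hw r_sum)
      ultimately show "(if b0 \<in> B then c (kcurve n t) b0 else 0) = (\<Sum>m\<in>M. g t m * r (e m) b0)" by simp
    qed
    have D1: "((\<lambda>t. if b0 \<in> B then c (kcurve n t) b0 else 0) has_vector_derivative (if b0 \<in> B then d b0 else 0)) (at 0)"
      using d1 by (cases "b0 \<in> B") auto
    have D2: "((\<lambda>t. \<Sum>m\<in>M. g t m * r (e m) b0) has_vector_derivative (\<Sum>m\<in>M. g' m * r (e m) b0)) (at 0)"
      by (intro has_vector_derivative_sum has_vector_derivative_mult_left hd)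
    have "(if b0 \<in> B then d b0 else 0) = (\<Sum>m\<in>M. g' m * r (e m) b0)"
      using D1 D2 unfolding eqf by (rule vector_derivative_unique_at)
    then show ?thesis by (simp only: d2 rB[of d b0] r_sum[of "\<lambda>m. g' m" e M b0])
  qed
  then have req: "r (rho (ktangent n) w) = r (\<Sum>m\<in>M. sc (g' m) (e m))" by auto
  show ?thesis
    using V.sum_nonzero_representation_eq[OF indBf inspan, of "rho (ktangent n) w"]
      V.sum_nonzero_representation_eq[OF indBf inspan, of "\<Sum>m\<in>M. sc (g' m) (e m)"]
    unfolding r_def[symmetric] req by simp
qed

end

primrec Pop :: "(complex \<Rightarrow> 'v::ab_group_add \<Rightarrow> 'v) \<Rightarrow> ('v \<Rightarrow> 'v) \<Rightarrow> nat \<Rightarrow> nat \<Rightarrow> 'v \<Rightarrow> 'v" where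
  "Pop sc T p 0 x = x"
| "Pop sc T p (Suc k) x = T (Pop sc T p k x) - sc (\<i> * (of_nat p - 2 * of_nat k)) (Pop sc T p k x)"

lemma delta_P: "m \<le> p \<Longrightarrow> delta m \<in> Pspace p"
  by (simp add: delta_def Pspace_def)

context gk begin

lemma phi_zero:
  assumes A2: "\<forall>f\<in>Pspace p. \<forall>c. \<phi> (\<lambda>j. c * f j) = sc c (\<phi> f)"
  shows "\<phi> (\<lambda>j. 0) = 0"
proof -
  have "(\<lambda>j. 0::complex) \<in> Pspace p" by (simp add: Pspace_def)
  from A2[rule_format, OF this, of 0] show ?thesis by simp
qed

lemma phi_sum:
  assumes A1: "\<forall>f\<in>Pspace p. \<forall>g\<in>Pspace p. \<phi> (\<lambda>j. f j + g j) = \<phi> f + \<phi> g"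
    and A2: "\<forall>f\<in>Pspace p. \<forall>c. \<phi> (\<lambda>j. c * f j) = sc c (\<phi> f)"
    and S: "finite S" and F: "\<forall>i\<in>S. F i \<in> Pspace p"
  shows "\<phi> (\<lambda>j. \<Sum>i\<in>S. F i j) = (\<Sum>i\<in>S. \<phi> (F i))"
  using S F
proof (induction S rule: finite_induct)
  case empty
  then show ?case using phi_zero[OF A2] by simp
next
  case (insert x S)
  have P: "(\<lambda>j. \<Sum>i\<in>S. F i j) \<in> Pspace p" using insert.prems by (simp add: Pspace_def)
  have "\<phi> (\<lambda>j. \<Sum>i\<in>insert x S. F i j) = \<phi> (\<lambda>j. F x j + (\<Sum>i\<in>S. F i j))"
    using insert.hyps by simp
  also have "\<dots> = \<phi> (F x) + \<phi> (\<lambda>j. \<Sum>i\<in>S. F i j)"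
    using A1[rule_format, OF _ P, of "F x"] insert.prems by simp
  finally show ?case using insert by simp
qed

lemma phi_expand:
  assumes A1: "\<forall>f\<in>Pspace p. \<forall>g\<in>Pspace p. \<phi> (\<lambda>j. f j + g j) = \<phi> f + \<phi> g"
    and A2: "\<forall>f\<in>Pspace p. \<forall>c. \<phi> (\<lambda>j. c * f j) = sc c (\<phi> f)"
    and f: "f \<in> Pspace p"
  shows "\<phi> f = (\<Sum>m\<le>p. sc (f m) (\<phi> (delta m)))"
proof -
  have fe: "f = (\<lambda>j. \<Sum>m\<le>p. f m * delta m j)"
  proof
    fix j
    have "(\<Sum>m\<le>p. f m * delta m j) = (\<Sum>m\<le>p. if m = j then f j else 0)"
      by (intro sum.cong) (auto simp: delta_def)
    also have "\<dots> = f j" using f by (auto simp: Pspace_def)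
    finally show "f j = (\<Sum>m\<le>p. f m * delta m j)" by simp
  qed
  have "\<phi> f = (\<Sum>m\<le>p. \<phi> (\<lambda>j. f m * delta m j))"
    by (subst fe, rule phi_sum[OF A1 A2]) (auto simp: Pspace_def delta_def)
  also have "\<dots> = (\<Sum>m\<le>p. sc (f m) (\<phi> (delta m)))"
    using A2 delta_P by (intro sum.cong) auto
  finally show ?thesis .
qed

lemma copy_tangent:
  assumes A1: "\<forall>f\<in>Pspace p. \<forall>g\<in>Pspace p. \<phi> (\<lambda>j. f j + g j) = \<phi> f + \<phi> g"
    and A2: "\<forall>f\<in>Pspace p. \<forall>c. \<phi> (\<lambda>j. c * f j) = sc c (\<phi> f)"
    and A3: "\<forall>(\<eta>, \<alpha>, \<beta>)\<in>Kpar. \<forall>f\<in>Pspace p. \<phi> (tauh h p \<eta> \<alpha> \<beta> f) = piK (kmat \<eta> \<alpha> \<beta>) (\<phi> f)"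
    and f: "f \<in> Pspace p" and n: "n < 4"
    and par1: "\<And>t. (E t, Al t, Be t) \<in> Kpar" and par2: "\<And>t. kcurve n t = kmat (E t) (Al t) (Be t)"
    and hd: "\<And>m. m \<le> p \<Longrightarrow> ((\<lambda>t. tauh h p (E t) (Al t) (Be t) f m) has_vector_derivative g' m) (at 0)"
  shows "rho (ktangent n) (\<phi> f) = (\<Sum>m\<le>p. sc (g' m) (\<phi> (delta m)))"
proof (rule deriv_lemma[OF n finite_atMost _ hd])
  fix t
  have "piK (kcurve n t) (\<phi> f) = \<phi> (tauh h p (E t) (Al t) (Be t) f)"
    using bspec[OF A3 par1[of t]] f by (simp add: par2)
  also have "\<dots> = (\<Sum>m\<le>p. sc (tauh h p (E t) (Al t) (Be t) f m) (\<phi> (delta m)))"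
    by (rule phi_expand[OF A1 A2 tauh_Pspace])
  finally show "piK (kcurve n t) (\<phi> f) = (\<Sum>m\<le>p. sc (tauh h p (E t) (Al t) (Be t) f m) (\<phi> (delta m)))" .
qed simp

end

context gk begin

lemma sub_eig: "V.subspace {x. rho X x = sc c x}" if "X \<in> sl3"
proof (rule V.subspaceI)
  show "0 \<in> {x. rho X x = sc c x}" using rho_zero[OF that] by simp
  show "x + y \<in> {x. rho X x = sc c x}" if "x \<in> {x. rho X x = sc c x}" "y \<in> {x. rho X x = sc c x}" for x y
    using that rho_add[OF \<open>X \<in> sl3\<close>] by (simp add: V.scale_right_distrib)
  show "sc a x \<in> {x. rho X x = sc c x}" if "x \<in> {x. rho X x = sc c x}" for a x
    using that rho_sc[OF \<open>X \<in> sl3\<close>] by (simp add: mult.commute)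
qed

lemma sub_pre: "V.subspace {x. T x \<in> V.span S}" if "Vector_Spaces.linear sc sc T"
proof (rule V.subspaceI)
  have Tsc: "T (sc a x) = sc a (T x)" for a x using \<open>Vector_Spaces.linear sc sc T\<close>
      unfolding Vector_Spaces.linear_def module_hom_def module_hom_axioms_def by auto
  have T0: "T 0 = 0" using Tsc[of 0 0] by simp
  show "0 \<in> {x. T x \<in> V.span S}" using T0 V.span_zero by simp
  show "x + y \<in> {x. T x \<in> V.span S}" if "x \<in> {x. T x \<in> V.span S}" "y \<in> {x. T x \<in> V.span S}" for x y
  proof -
    have "T (x + y) = T x + T y" using \<open>Vector_Spaces.linear sc sc T\<close>
      unfolding Vector_Spaces.linear_def module_hom_def module_hom_axioms_def by auto
    then show ?thesis using that V.span_add by simp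
  qed
  show "sc a x \<in> {x. T x \<in> V.span S}" if "x \<in> {x. T x \<in> V.span S}" for a x
  proof -
    have "T (sc a x) = sc a (T x)" using \<open>Vector_Spaces.linear sc sc T\<close>
      unfolding Vector_Spaces.linear_def module_hom_def module_hom_axioms_def by auto
    then show ?thesis using that V.span_scale by simp
  qed
qed

lemma copy_obtain:
  assumes "tau_copy sc piK h p U"
  obtains \<phi> where "bij_betw \<phi> (Pspace p) U"
    "\<forall>f\<in>Pspace p. \<forall>g\<in>Pspace p. \<phi> (\<lambda>j. f j + g j) = \<phi> f + \<phi> g"
    "\<forall>f\<in>Pspace p. \<forall>c. \<phi> (\<lambda>j. c * f j) = sc c (\<phi> f)"
    "\<forall>(\<eta>, \<alpha>, \<beta>)\<in>Kpar. \<forall>f\<in>Pspace p. \<phi> (tauh h p \<eta> \<alpha> \<beta> f) = piK (kmat \<eta> \<alpha> \<beta>) (\<phi> f)"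
  using assms unfolding tau_copy_def by blast

lemma copy_CK:
  assumes A1: "\<forall>f\<in>Pspace p. \<forall>g\<in>Pspace p. \<phi> (\<lambda>j. f j + g j) = \<phi> f + \<phi> g"
    and A2: "\<forall>f\<in>Pspace p. \<forall>c. \<phi> (\<lambda>j. c * f j) = sc c (\<phi> f)"
    and A3: "\<forall>(\<eta>, \<alpha>, \<beta>)\<in>Kpar. \<forall>f\<in>Pspace p. \<phi> (tauh h p \<eta> \<alpha> \<beta> f) = piK (kmat \<eta> \<alpha> \<beta>) (\<phi> f)"
    and f: "f \<in> Pspace p"
  shows "rho CKi (\<phi> f) = sc (- \<i> * of_int h) (\<phi> f)"
proof -
  have "rho (ktangent 0) (\<phi> f) = (\<Sum>m\<le>p. sc (- \<i> * of_int h * f m) (\<phi> (delta m)))"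
    by (rule copy_tangent[OF A1 A2 A3 f, of 0 "\<lambda>t. cis t" "\<lambda>t. 1" "\<lambda>t. 0"])
       (use curve0_deriv[OF f] in \<open>auto simp: Kpar_def kcurve_def\<close>)
  also have "\<dots> = sc (- \<i> * of_int h) (\<Sum>m\<le>p. sc (f m) (\<phi> (delta m)))"
    by (simp add: V.scale_sum_right)
  also have "\<dots> = sc (- \<i> * of_int h) (\<phi> f)"
    using phi_expand[OF A1 A2 f] by simp
  finally show ?thesis by (simp add: tang01)
qed

lemma copy_W0:
  assumes A1: "\<forall>f\<in>Pspace p. \<forall>g\<in>Pspace p. \<phi> (\<lambda>j. f j + g j) = \<phi> f + \<phi> g"
    and A2: "\<forall>f\<in>Pspace p. \<forall>c. \<phi> (\<lambda>j. c * f j) = sc c (\<phi> f)"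
    and A3: "\<forall>(\<eta>, \<alpha>, \<beta>)\<in>Kpar. \<forall>f\<in>Pspace p. \<phi> (tauh h p \<eta> \<alpha> \<beta> f) = piK (kmat \<eta> \<alpha> \<beta>) (\<phi> f)"
    and m: "m \<le> p"
  shows "rho W0 (\<phi> (delta m)) = sc (\<i> * (of_nat p - 2 * of_nat m)) (\<phi> (delta m))"
proof -
  have "rho (ktangent 1) (\<phi> (delta m)) = (\<Sum>j\<le>p. sc (\<i> * (of_nat p - 2 * of_nat j) * delta m j) (\<phi> (delta j)))"
    by (rule copy_tangent[OF A1 A2 A3 delta_P[OF m], of 1 "\<lambda>t. 1" "\<lambda>t. cis t" "\<lambda>t. 0"])
       (use curve1_deriv[OF delta_P[OF m]] in \<open>auto simp: Kpar_def kcurve_def\<close>)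
  also have "\<dots> = (\<Sum>j\<le>p. if j = m then sc (\<i> * (of_nat p - 2 * of_nat m)) (\<phi> (delta m)) else 0)"
    by (intro sum.cong) (auto simp: delta_def)
  also have "\<dots> = sc (\<i> * (of_nat p - 2 * of_nat m)) (\<phi> (delta m))" using m by simp
  finally show ?thesis by (simp add: ktangent_def)
qed

lemma copy_T:
  assumes A1: "\<forall>f\<in>Pspace p. \<forall>g\<in>Pspace p. \<phi> (\<lambda>j. f j + g j) = \<phi> f + \<phi> g"
    and A2: "\<forall>f\<in>Pspace p. \<forall>c. \<phi> (\<lambda>j. c * f j) = sc c (\<phi> f)"
    and A3: "\<forall>(\<eta>, \<alpha>, \<beta>)\<in>Kpar. \<forall>f\<in>Pspace p. \<phi> (tauh h p \<eta> \<alpha> \<beta> f) = piK (kmat \<eta> \<alpha> \<beta>) (\<phi> f)"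
    and f: "f \<in> Pspace p" and n: "n = 2 \<or> n = 3"
  shows "rho (ktangent n) (\<phi> f) \<in> V.span (\<phi> ` Pspace p)"
proof -
  obtain E Al Be where par1: "\<And>t. (E t, Al t, Be t) \<in> Kpar" and par2: "\<And>t. kcurve n t = kmat (E t) (Al t) (Be t)"
    and dif: "\<And>m. (\<lambda>t. tauh h p (E t) (Al t) (Be t) f m) differentiable (at 0)"
  proof (cases "n = 2")
    case True
    show ?thesis
      by (rule that[of "\<lambda>t. 1" "\<lambda>t. complex_of_real (cos t)" "\<lambda>t. complex_of_real (sin t)"])
         (auto simp: Kpar_def kcurve_def True curve2_diff)
  next
    case False
    then have n3: "n = 3" using n by simp
    have sc2: "(cos t)\<^sup>2 + (cmod (\<i> * complex_of_real (sin t)))\<^sup>2 = 1" for t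
      by (simp add: norm_mult)
    show ?thesis
      by (rule that[of "\<lambda>t. 1" "\<lambda>t. complex_of_real (cos t)" "\<lambda>t. \<i> * complex_of_real (sin t)"])
         (auto simp: Kpar_def kcurve_def n3 curve3_diff sc2)
  qed
  have "rho (ktangent n) (\<phi> f) = (\<Sum>m\<le>p. sc (vector_derivative (\<lambda>t. tauh h p (E t) (Al t) (Be t) f m) (at 0)) (\<phi> (delta m)))"
    by (rule copy_tangent[OF A1 A2 A3 f _ par1 par2])
       (use n dif in \<open>auto simp: vector_derivative_works[symmetric]\<close>)
  also have "\<dots> \<in> V.span (\<phi> ` Pspace p)"
    by (intro V.span_sum V.span_scale V.span_base) (auto intro: delta_P)
  finally show ?thesis .
qed

end

context gk begin

lemma S_cases:
  assumes "x \<in> \<Union>{U. tau_copy sc piK h p U}"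
  obtains \<phi> f where
    "\<forall>f\<in>Pspace p. \<forall>g\<in>Pspace p. \<phi> (\<lambda>j. f j + g j) = \<phi> f + \<phi> g"
    "\<forall>f\<in>Pspace p. \<forall>c. \<phi> (\<lambda>j. c * f j) = sc c (\<phi> f)"
    "\<forall>(\<eta>, \<alpha>, \<beta>)\<in>Kpar. \<forall>f\<in>Pspace p. \<phi> (tauh h p \<eta> \<alpha> \<beta> f) = piK (kmat \<eta> \<alpha> \<beta>) (\<phi> f)"
    "f \<in> Pspace p" "x = \<phi> f" "\<phi> ` Pspace p \<subseteq> \<Union>{U. tau_copy sc piK h p U}"
proof -
  from assms obtain U where U: "tau_copy sc piK h p U" "x \<in> U" by blast
  from copy_obtain[OF U(1)] obtain \<phi> where P: "bij_betw \<phi> (Pspace p) U"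
    "\<forall>f\<in>Pspace p. \<forall>g\<in>Pspace p. \<phi> (\<lambda>j. f j + g j) = \<phi> f + \<phi> g"
    "\<forall>f\<in>Pspace p. \<forall>c. \<phi> (\<lambda>j. c * f j) = sc c (\<phi> f)"
    "\<forall>(\<eta>, \<alpha>, \<beta>)\<in>Kpar. \<forall>f\<in>Pspace p. \<phi> (tauh h p \<eta> \<alpha> \<beta> f) = piK (kmat \<eta> \<alpha> \<beta>) (\<phi> f)" .
  have img: "\<phi> ` Pspace p = U" using P(1) by (simp add: bij_betw_def)
  then obtain f where f: "f \<in> Pspace p" "x = \<phi> f" using U(2) by blast
  have sub: "\<phi> ` Pspace p \<subseteq> \<Union>{U. tau_copy sc piK h p U}" using img U(1) by blast
  show ?thesis by (rule that[OF P(2) P(3) P(4) f(1) f(2) sub])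
qed

lemma Viso_CK: "x \<in> Viso sc piK h p \<Longrightarrow> rho CKi x = sc (- \<i> * of_int h) x"
proof -
  assume x: "x \<in> Viso sc piK h p"
  have "Viso sc piK h p \<subseteq> {x. rho CKi x = sc (- \<i> * of_int h) x}"
    unfolding Viso_def
  proof (rule V.span_minimal)
    show "\<Union>{U. tau_copy sc piK h p U} \<subseteq> {x. rho CKi x = sc (- \<i> * of_int h) x}"
    proof
      fix y assume "y \<in> \<Union>{U. tau_copy sc piK h p U}"
      then obtain \<phi> f where
        A1: "\<forall>f\<in>Pspace p. \<forall>g\<in>Pspace p. \<phi> (\<lambda>j. f j + g j) = \<phi> f + \<phi> g" and
        A2: "\<forall>f\<in>Pspace p. \<forall>c. \<phi> (\<lambda>j. c * f j) = sc c (\<phi> f)" and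
        A3: "\<forall>(\<eta>, \<alpha>, \<beta>)\<in>Kpar. \<forall>f\<in>Pspace p. \<phi> (tauh h p \<eta> \<alpha> \<beta> f) = piK (kmat \<eta> \<alpha> \<beta>) (\<phi> f)"
        and f: "f \<in> Pspace p" "y = \<phi> f"
        by (rule S_cases)
      show "y \<in> {x. rho CKi x = sc (- \<i> * of_int h) x}"
        using copy_CK[OF A1 A2 A3 f(1)] f(2) by simp
    qed
    show "V.subspace {x. rho CKi x = sc (- \<i> * of_int h) x}" by (rule sub_eig) (simp add: sl3_basis)
  qed
  then show ?thesis using x by blast
qed

lemma Viso_T: "n = 2 \<or> n = 3 \<Longrightarrow> x \<in> Viso sc piK h p \<Longrightarrow> rho (ktangent n) x \<in> Viso sc piK h p"
proof -
  assume n: "n = 2 \<or> n = 3" and x: "x \<in> Viso sc piK h p"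
  have "Viso sc piK h p \<subseteq> {x. rho (ktangent n) x \<in> V.span (\<Union>{U. tau_copy sc piK h p U})}"
    unfolding Viso_def
  proof (rule V.span_minimal)
    show "\<Union>{U. tau_copy sc piK h p U} \<subseteq> {x. rho (ktangent n) x \<in> V.span (\<Union>{U. tau_copy sc piK h p U})}"
    proof
      fix y assume "y \<in> \<Union>{U. tau_copy sc piK h p U}"
      then obtain \<phi> f where
        A1: "\<forall>f\<in>Pspace p. \<forall>g\<in>Pspace p. \<phi> (\<lambda>j. f j + g j) = \<phi> f + \<phi> g" and
        A2: "\<forall>f\<in>Pspace p. \<forall>c. \<phi> (\<lambda>j. c * f j) = sc c (\<phi> f)" and
        A3: "\<forall>(\<eta>, \<alpha>, \<beta>)\<in>Kpar. \<forall>f\<in>Pspace p. \<phi> (tauh h p \<eta> \<alpha> \<beta> f) = piK (kmat \<eta> \<alpha> \<beta>) (\<phi> f)"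
        and f: "f \<in> Pspace p" "y = \<phi> f" and im: "\<phi> ` Pspace p \<subseteq> \<Union>{U. tau_copy sc piK h p U}"
        by (rule S_cases)
      show "y \<in> {x. rho (ktangent n) x \<in> V.span (\<Union>{U. tau_copy sc piK h p U})}"
        using copy_T[OF A1 A2 A3 f(1) n] f(2) V.span_mono[OF im] by auto
    qed
    show "V.subspace {x. rho (ktangent n) x \<in> V.span (\<Union>{U. tau_copy sc piK h p U})}"
      by (rule sub_pre, rule LIN, rule ktangent_sl3)
  qed
  then show ?thesis using x unfolding Viso_def by blast
qed

lemma Pop_zero: "Pop sc (rho W0) p k 0 = 0"
  by (induction k) (simp_all add: rho_zero sl3_basis)

lemma Pop_add: "Pop sc (rho W0) p k (x + y) = Pop sc (rho W0) p k x + Pop sc (rho W0) p k y"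
proof (induction k)
  case (Suc k)
  show ?case by (simp only: Pop.simps Suc.IH rho_add[OF sl3_basis(2)] V.scale_right_distrib add_diff_add)
qed simp

lemma Pop_sc: "Pop sc (rho W0) p k (sc c x) = sc c (Pop sc (rho W0) p k x)"
proof (induction k)
  case (Suc k)
  show ?case by (simp only: Pop.simps Suc.IH rho_sc[OF sl3_basis(2)] V.scale_right_diff_distrib V.scale_scale mult.commute)
qed simp

lemma Pop_sum: "Pop sc (rho W0) p k (\<Sum>i\<in>I. g i) = (\<Sum>i\<in>I. Pop sc (rho W0) p k (g i))"
  by (induction I rule: infinite_finite_induct) (simp_all add: Pop_zero Pop_add)

lemma Pop_eig:
  assumes "rho W0 x = sc \<mu> x"
  shows "Pop sc (rho W0) p k x = sc (\<Prod>j<k. (\<mu> - \<i> * (of_nat p - 2 * of_nat j))) x"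
proof (induction k)
  case 0
  then show ?case by simp
next
  case (Suc k)
  define P where "P = (\<Prod>j<k. (\<mu> - \<i> * (of_nat p - 2 * of_nat j)))"
  have "Pop sc (rho W0) p (Suc k) x = rho W0 (sc P x) - sc (\<i> * (of_nat p - 2 * of_nat k)) (sc P x)"
    using Suc by (simp add: P_def)
  also have "\<dots> = sc (P * \<mu>) x - sc (\<i> * (of_nat p - 2 * of_nat k) * P) x"
    by (simp add: rho_sc sl3_basis assms)
  also have "\<dots> = sc (P * \<mu> - \<i> * (of_nat p - 2 * of_nat k) * P) x"
    by (rule V.scale_left_diff_distrib[symmetric])
  also have "P * \<mu> - \<i> * (of_nat p - 2 * of_nat k) * P = P * (\<mu> - \<i> * (of_nat p - 2 * of_nat k))"
    by (simp add: algebra_simps)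
  finally show ?case by (simp add: P_def)
qed

lemma Viso_Pop: "x \<in> Viso sc piK h p \<Longrightarrow> Pop sc (rho W0) p (Suc p) x = 0"
proof -
  assume x: "x \<in> Viso sc piK h p"
  have "Viso sc piK h p \<subseteq> {x. Pop sc (rho W0) p (Suc p) x = 0}"
    unfolding Viso_def
  proof (rule V.span_minimal)
    show "\<Union>{U. tau_copy sc piK h p U} \<subseteq> {x. Pop sc (rho W0) p (Suc p) x = 0}"
    proof
      fix y assume "y \<in> \<Union>{U. tau_copy sc piK h p U}"
      then obtain \<phi> f where
        A1: "\<forall>f\<in>Pspace p. \<forall>g\<in>Pspace p. \<phi> (\<lambda>j. f j + g j) = \<phi> f + \<phi> g" and
        A2: "\<forall>f\<in>Pspace p. \<forall>c. \<phi> (\<lambda>j. c * f j) = sc c (\<phi> f)" and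
        A3: "\<forall>(\<eta>, \<alpha>, \<beta>)\<in>Kpar. \<forall>f\<in>Pspace p. \<phi> (tauh h p \<eta> \<alpha> \<beta> f) = piK (kmat \<eta> \<alpha> \<beta>) (\<phi> f)"
        and f: "f \<in> Pspace p" "y = \<phi> f"
        by (rule S_cases)
      have d0: "Pop sc (rho W0) p (Suc p) (\<phi> (delta m)) = 0" if m: "m \<le> p" for m
      proof -
        have "Pop sc (rho W0) p (Suc p) (\<phi> (delta m)) =
          sc (\<Prod>j<Suc p. (\<i> * (of_nat p - 2 * of_nat m) - \<i> * (of_nat p - 2 * of_nat j))) (\<phi> (delta m))"
          by (rule Pop_eig, rule copy_W0[OF A1 A2 A3 m])
        also have "(\<Prod>j<Suc p. (\<i> * (of_nat p - 2 * of_nat m) - \<i> * (of_nat p - 2 * of_nat j))) = 0"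
          using m by (intro prod_zero) (auto intro: bexI[of _ m])
        finally show ?thesis by simp
      qed
      have "Pop sc (rho W0) p (Suc p) y = (\<Sum>m\<le>p. sc (f m) (Pop sc (rho W0) p (Suc p) (\<phi> (delta m))))"
        unfolding f(2) phi_expand[OF A1 A2 f(1)] Pop_sum Pop_sc ..
      also have "\<dots> = 0" using d0 by simp
      finally show "y \<in> {x. Pop sc (rho W0) p (Suc p) x = 0}" by simp
    qed
    show "V.subspace {x. Pop sc (rho W0) p (Suc p) x = 0}"
      by (rule V.subspaceI) (simp_all only: mem_Collect_eq Pop_zero Pop_add Pop_sc add_0_right V.scale_zero_right)
  qed
  then show ?thesis using x by blast
qed

lemma Z21_zero:
  assumes v: "v \<in> Viso sc piK h p" and Wv: "rho W0 v = sc (- \<i> * of_nat p) v"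
  shows "rho Z21 v = 0"
proof -
  have xV: "rho Z21 v \<in> Viso sc piK h p"
  proof -
    have "rho Z21 v = rho (ktangent 2) v + sc \<i> (rho (ktangent 3) v)"
      unfolding Z21_tang by (simp add: rho_plus rho_cscale ktangent_sl3 sl3_cscale)
    moreover have "rho (ktangent 2) v \<in> Viso sc piK h p" "rho (ktangent 3) v \<in> Viso sc piK h p"
      using Viso_T v by auto
    ultimately show ?thesis unfolding Viso_def by (simp add: V.span_add V.span_scale)
  qed
  have We: "rho W0 (rho Z21 v) = sc (- \<i> * of_nat p + - 2 * \<i>) (rho Z21 v)"
    by (rule comm_eig[OF _ _ br9 Wv]) (simp_all add: sl3_basis)
  have fnz: "(- \<i> * of_nat p + - 2 * \<i>) - \<i> * (of_nat p - 2 * of_nat j) \<noteq> 0" if j: "j < Suc p" for j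
  proof -
    have e: "(- \<i> * of_nat p + - 2 * \<i>) - \<i> * (of_nat p - 2 * of_nat j) = - 2 * \<i> * (of_nat (Suc p) - of_nat j)"
      by (simp add: algebra_simps)
    have "(of_nat (Suc p) :: complex) \<noteq> of_nat j" using j by (simp only: of_nat_eq_iff)
    then show ?thesis unfolding e by simp
  qed
  have nz: "(\<Prod>j<Suc p. ((- \<i> * of_nat p + - 2 * \<i>) - \<i> * (of_nat p - 2 * of_nat j))) \<noteq> 0"
    using fnz by (subst prod_zero_iff) auto
  have "Pop sc (rho W0) p (Suc p) (rho Z21 v) = 0" by (rule Viso_Pop[OF xV])
  then have "sc (\<Prod>j<Suc p. ((- \<i> * of_nat p + - 2 * \<i>) - \<i> * (of_nat p - 2 * of_nat j))) (rho Z21 v) = 0"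
    unfolding Pop_eig[OF We] .
  then show ?thesis using nz by simp
qed

end

theorem lemma6p4:
  fixes sc :: "complex \<Rightarrow> 'v::ab_group_add \<Rightarrow> 'v"
    and rho piK :: "cmat \<Rightarrow> 'v \<Rightarrow> 'v"
    and h :: int and p :: nat and v :: 'v
  assumes "gK_module sc rho piK"
    and "even (h - int p)"
    and "minimal_vector sc rho piK h p v"
  shows "(sc (2 * (of_nat p + 1)) (rho Z32 v) = - rho Z12 (rho Z31 v)) \<and>
         (sc (2 * (of_nat p + 1)) (rho Z13 v) = rho Z12 (rho Z23 v)) \<and>
         (Sm3m1 sc rho (p + 1) (S3p1 rho v) - sc (of_nat p + 1) (S3m1 sc rho (p + 1) (Sm3p1 rho v))
           = sc ((of_nat p - of_int h) * (of_nat p + 1) / 2) v) \<and>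
         (Cop sc rho v = sc ((of_int h)^2 / 3 + (of_nat p)^2 + 2 * of_int h + 2 * of_nat p) v
           + sc (4 * (of_nat p + 2) / (of_nat p + 1)) (Sm3m1 sc rho (p + 1) (S3p1 rho v))) \<and>
         (Delta3 sc rho v = sc (of_int h * (of_int h + 3 * of_nat p + 12) * (of_int h - 3 * of_nat p + 6) / 9) v
           + sc (2 * (of_nat p + 2) * (of_int h - 3 * of_nat p + 6) / (of_nat p + 1)) (Sm3m1 sc rho (p + 1) (S3p1 rho v)))"
proof -
  interpret gk sc rho piK by unfold_locales (rule assms(1))
  have mv: "v \<in> Vhpp sc rho piK h p" "S3m1 sc rho p v = 0" "Sm3m1 sc rho p v = 0"
    using assms(3) unfolding minimal_vector_def by auto
  have vV: "v \<in> Viso sc piK h p" and Wv: "rho W0 v = sc (- \<i> * of_nat p) v"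
    using mv(1) unfolding Vhpp_def by auto
  show ?thesis
    by (rule algebra_part[OF Viso_CK[OF vV] Wv Z21_zero[OF vV Wv] mv(2) mv(3)])
qed

end
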